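(* Let $(X,d)$ be a compact metric space and $f:X\to X$ a cw-expansive homeomorphism. If $x\in X$ is a sink of $f$ and the $\alpha$-limit set $\alpha(x)$ contains a point $z$ at which $X$ is locally connected, then $x$ is periodic.
   Context: A homeomorphism $f:X\to X$ of a compact metric space is continuum-wise expansive (cw-expansive) if there is a constant $c>0$ such that $\sup_{n\in\mathbb Z}\operatorname{diam} f^n(C)>c$ for every continuum $C\subset X$ containing more than one point. For $\varepsilon>0$ and $x\in X$: $W^s_\varepsilon(x)=\{y\in X:\ d(f^n(x),f^n(y))\le\varepsilon \text{ for all } n\ge 0\}$ and $W^s(x)=\{y\in X:\ d(f^n(x),f^n(y))\to 0 \text{ as } n\to\infty\}$. A point $x$ is a weak sink if $W^s_\varepsilon(x)$ is a neighborhood of $x$ for every $\varepsilon>0$; $x$ is a sink if it is a weak sink and there exists $\varepsilon>0$ with $W^s_\varepsilon(x)\subset W^s(x)$. The $\alpha$-limit set $\alpha(x)$ is the set of limits of sequences $f^{-n_k}(x)$ with $n_k\to\infty$. $X$ is locally connected at $z$ if every neighborhood of $z$ contains a connected neighborhood of $z$. *)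

theory Defs
  imports "HOL-Analysis.Analysis"
begin

definition zit :: "('a \<Rightarrow> 'a) \<Rightarrow> ('a \<Rightarrow> 'a) \<Rightarrow> int \<Rightarrow> 'a \<Rightarrow> 'a" where
  "zit f g n = (if n \<ge> 0 then f ^^ nat n else g ^^ nat (- n))"

definition cw_expansive :: "'a::metric_space set \<Rightarrow> ('a \<Rightarrow> 'a) \<Rightarrow> ('a \<Rightarrow> 'a) \<Rightarrow> bool" where
  "cw_expansive X f g \<longleftrightarrow> (\<exists>c>0. \<forall>C. C \<subseteq> X \<and> compact C \<and> connected C \<and> (\<exists>a\<in>C. \<exists>b\<in>C. a \<noteq> b)
      \<longrightarrow> (SUP n\<in>(UNIV::int set). ereal (diameter (zit f g n ` C))) > ereal c)"

definition local_stable_set :: "'a::metric_space set \<Rightarrow> ('a \<Rightarrow> 'a) \<Rightarrow> real \<Rightarrow> 'a \<Rightarrow> 'a set" where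
  "local_stable_set X f e x = {y\<in>X. \<forall>n. dist ((f ^^ n) x) ((f ^^ n) y) \<le> e}"

definition stable_set :: "'a::metric_space set \<Rightarrow> ('a \<Rightarrow> 'a) \<Rightarrow> 'a \<Rightarrow> 'a set" where
  "stable_set X f x = {y\<in>X. (\<lambda>n. dist ((f ^^ n) x) ((f ^^ n) y)) \<longlonglongrightarrow> 0}"

definition nbhd_in :: "'a::metric_space set \<Rightarrow> 'a set \<Rightarrow> 'a \<Rightarrow> bool" where
  "nbhd_in X N x \<longleftrightarrow> N \<subseteq> X \<and> (\<exists>U. openin (top_of_set X) U \<and> x \<in> U \<and> U \<subseteq> N)"

definition weak_sink :: "'a::metric_space set \<Rightarrow> ('a \<Rightarrow> 'a) \<Rightarrow> 'a \<Rightarrow> bool" where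
  "weak_sink X f x \<longleftrightarrow> (\<forall>e>0. nbhd_in X (local_stable_set X f e x) x)"

definition sink :: "'a::metric_space set \<Rightarrow> ('a \<Rightarrow> 'a) \<Rightarrow> 'a \<Rightarrow> bool" where
  "sink X f x \<longleftrightarrow> weak_sink X f x \<and> (\<exists>e>0. local_stable_set X f e x \<subseteq> stable_set X f x)"

definition alpha_limit :: "('a::metric_space \<Rightarrow> 'a) \<Rightarrow> 'a \<Rightarrow> 'a set" where
  "alpha_limit g x = {z. \<exists>r. strict_mono r \<and> (\<lambda>k. (g ^^ r k) x) \<longlonglongrightarrow> z}"

definition space_locally_connected_at :: "'a::topological_space set \<Rightarrow> 'a \<Rightarrow> bool" where
  "space_locally_connected_at X z \<longleftrightarrow> (\<forall>N. N \<subseteq> X \<and> (\<exists>U. openin (top_of_set X) U \<and> z \<in> U \<and> U \<subseteq> N) \<longrightarrow>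
      (\<exists>C. C \<subseteq> N \<and> connected C \<and> (\<exists>U. openin (top_of_set X) U \<and> z \<in> U \<and> U \<subseteq> C)))"

end

theory Submission
  imports Defs
begin

lemma funpow_in: "f ` X \<subseteq> X \<Longrightarrow> x \<in> X \<Longrightarrow> (f ^^ n) x \<in> X"
  by (induction n) auto

lemma funpow_cont: "continuous_on X f \<Longrightarrow> f ` X \<subseteq> X \<Longrightarrow> continuous_on X (f ^^ n)"
proof (induction n)
  case 0 then show ?case by (simp add: continuous_on_id)
next
  case (Suc n)
  have "(f ^^ Suc n) = f \<circ> (f ^^ n)" by simp
  moreover have "(f ^^ n) ` X \<subseteq> X" using funpow_in[OF Suc.prems(2)] by blast
  ultimately show ?case
    using Suc continuous_on_compose continuous_on_subset by metis
qed

lemma fg_cancel: "(\<forall>y\<in>X. f (g y) = y) \<Longrightarrow> g ` X \<subseteq> X \<Longrightarrow> y \<in> X \<Longrightarrow> (f ^^ n) ((g ^^ n) y) = y"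
proof (induction n arbitrary: y)
  case 0 then show ?case by simp
next
  case (Suc n)
  have g1: "(g ^^ Suc n) y = g ((g ^^ n) y)" by simp
  have f1: "\<And>v. (f ^^ Suc n) v = (f ^^ n) (f v)" by (simp add: funpow_Suc_right del: funpow.simps)
  have "(f ^^ Suc n) ((g ^^ Suc n) y) = (f ^^ n) (f (g ((g ^^ n) y)))"
    by (simp only: g1 f1)
  also have "\<dots> = (f ^^ n) ((g ^^ n) y)" using Suc.prems funpow_in by metis
  also have "\<dots> = y" using Suc by blast
  finally show ?case .
qed

lemma zit_g:
  assumes fg: "\<forall>y\<in>X. f (g y) = y" and gX: "g ` X \<subseteq> X" and a: "a \<in> X"
  shows "zit f g j ((g ^^ i) a) = zit f g (j - int i) a"
proof (cases "j \<ge> 0")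
  case True
  show ?thesis
  proof (cases "nat j \<ge> i")
    case True
    have "(f ^^ nat j) ((g ^^ i) a) = (f ^^ (nat j - i)) ((f ^^ i) ((g ^^ i) a))"
      using True by (metis funpow_add le_add_diff_inverse2 comp_apply)
    also have "\<dots> = (f ^^ (nat j - i)) a" using fg_cancel[OF fg gX a] by simp
    finally show ?thesis using True \<open>j \<ge> 0\<close> unfolding zit_def
      by (simp add: nat_diff_distrib)
  next
    case False
    have "(g ^^ i) a = (g ^^ nat j) ((g ^^ (i - nat j)) a)"
      using False by (metis funpow_add le_add_diff_inverse nat_le_linear comp_apply)
    then have "(f ^^ nat j) ((g ^^ i) a) = (g ^^ (i - nat j)) a"
      using fg_cancel[OF fg gX] funpow_in[OF gX a] by metis
    moreover have "nat (- (j - int i)) = i - nat j" using False \<open>j \<ge> 0\<close> by linarith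
    moreover have "\<not> (j - int i \<ge> 0)" using False \<open>j \<ge> 0\<close> by linarith
    ultimately show ?thesis using \<open>j \<ge> 0\<close> unfolding zit_def by (simp only: if_True if_False)
  qed
next
  case False
  have "(g ^^ nat (- j)) ((g ^^ i) a) = (g ^^ (nat (-j) + i)) a" by (simp add: funpow_add)
  moreover have "nat (- (j - int i)) = nat (-j) + i" using False by linarith
  ultimately show ?thesis using False unfolding zit_def by simp
qed

lemma zit_cont:
  assumes "homeomorphism X X f g"
  shows "continuous_on X (zit f g j)"
proof -
  have "continuous_on X f" "continuous_on X g" "f ` X \<subseteq> X" "g ` X \<subseteq> X"
    using assms unfolding homeomorphism_def by auto
  then show ?thesis unfolding zit_def by (auto intro: funpow_cont)
qed

lemma zit_in:
  assumes "homeomorphism X X f g" "a \<in> X"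
  shows "zit f g j a \<in> X"
proof -
  have "f ` X \<subseteq> X" "g ` X \<subseteq> X"
    using assms unfolding homeomorphism_def by auto
  then show ?thesis unfolding zit_def using assms(2) by (auto intro: funpow_in)
qed

lemma unif_iter:
  fixes X :: "'a::metric_space set"
  assumes "compact X" "continuous_on X f" "f ` X \<subseteq> X" "\<mu> > 0"
  shows "\<exists>\<eta>>0. \<forall>i<N. \<forall>u\<in>X. \<forall>v\<in>X. dist u v < \<eta> \<longrightarrow> dist ((f ^^ i) u) ((f ^^ i) v) < \<mu>"
proof (induction N)
  case 0 then show ?case by (intro exI[of _ 1]) auto
next
  case (Suc N)
  then obtain \<eta>1 where e1: "\<eta>1 > 0" "\<forall>i<N. \<forall>u\<in>X. \<forall>v\<in>X. dist u v < \<eta>1 \<longrightarrow> dist ((f ^^ i) u) ((f ^^ i) v) < \<mu>"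
    by blast
  have "uniformly_continuous_on X (f ^^ N)"
    using compact_uniformly_continuous funpow_cont assms by blast
  then obtain \<eta>2 where e2: "\<eta>2 > 0" "\<forall>u\<in>X. \<forall>v\<in>X. dist v u < \<eta>2 \<longrightarrow> dist ((f ^^ N) v) ((f ^^ N) u) < \<mu>"
    unfolding uniformly_continuous_on_def using assms(4) by blast
  show ?case
  proof (intro exI[of _ "min \<eta>1 \<eta>2"] conjI allI impI ballI)
    fix i u v assume "i < Suc N" "u \<in> X" "v \<in> X" "dist u v < min \<eta>1 \<eta>2"
    then show "dist ((f ^^ i) u) ((f ^^ i) v) < \<mu>"
      using e1 e2 by (metis less_SucE min_less_iff_conj)
  qed (use e1 e2 in auto)
qed


lemma compact_nest_metric:
  fixes F :: "nat \<Rightarrow> 'a::metric_space set"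
  assumes cF: "\<And>n. compact (F n)" and nF: "\<And>n. F n \<noteq> {}" and mF: "\<And>m n. m \<le> n \<Longrightarrow> F n \<subseteq> F m"
  shows "(\<Inter>n. F n) \<noteq> {}"
proof -
  have "F 0 \<inter> (\<Inter>i\<in>UNIV. F i) \<noteq> {}"
  proof (rule compact_imp_fip_image[OF cF[of 0]])
    show "closed (F i)" for i using cF compact_imp_closed by blast
    fix I' :: "nat set" assume fin: "finite I'" and "I' \<subseteq> UNIV"
    define M where "M = Max (insert 0 I')"
    have a1: "F M \<subseteq> F i" if "i \<in> I'" for i
      using mF[of i M] Max_ge[of "insert 0 I'" i] fin that unfolding M_def by auto
    have a2: "F M \<subseteq> F 0"
      using mF[of 0 M] by auto
    have "F M \<subseteq> F 0 \<inter> (\<Inter>i\<in>I'. F i)" using a1 a2 by blast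
    then show "F 0 \<inter> (\<Inter>i\<in>I'. F i) \<noteq> {}" using nF[of M] by blast
  qed
  then show ?thesis by blast
qed

lemma limit_lemma:
  fixes X :: "'a::metric_space set"
  assumes X: "compact X" and hom: "homeomorphism X X f g"
    and cw: "\<forall>C. C \<subseteq> X \<and> compact C \<and> connected C \<and> (\<exists>a\<in>C. \<exists>b\<in>C. a \<noteq> b)
      \<longrightarrow> (SUP n\<in>(UNIV::int set). ereal (diameter (zit f g n ` C))) > ereal c"
    and c: "c > 0"
    and mu: "\<mu> > 0"
  shows "\<exists>N::nat. \<forall>A w. A \<subseteq> X \<longrightarrow> compact A \<longrightarrow> connected A \<longrightarrow> w \<in> A \<longrightarrow>
     (\<forall>j. \<bar>j\<bar> \<le> int N \<longrightarrow> (\<forall>v\<in>A. dist (zit f g j v) (zit f g j w) \<le> c/2)) \<longrightarrow>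
     (\<forall>v\<in>A. dist v w < \<mu>)"
proof (rule ccontr)
  assume neg: "\<not> ?thesis"
  define Good where "Good N A w v \<longleftrightarrow> A \<subseteq> X \<and> compact A \<and> connected A \<and> w \<in> A \<and>
     (\<forall>j. \<bar>j\<bar> \<le> int N \<longrightarrow> (\<forall>v\<in>A. dist (zit f g j v) (zit f g j w) \<le> c/2)) \<and>
     v \<in> A \<and> dist v w \<ge> \<mu>" for N A w v
  have "\<exists>A w v. Good N A w v" for N
  proof -
    have "\<not> (\<forall>A w. A \<subseteq> X \<longrightarrow> compact A \<longrightarrow> connected A \<longrightarrow> w \<in> A \<longrightarrow>
     (\<forall>j. \<bar>j\<bar> \<le> int N \<longrightarrow> (\<forall>v\<in>A. dist (zit f g j v) (zit f g j w) \<le> c/2)) \<longrightarrow>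
     (\<forall>v\<in>A. dist v w < \<mu>))" using neg by (rule contrapos_nn) (rule exI[of _ N])
    then obtain A w v where "A \<subseteq> X" "compact A" "connected A" "w \<in> A"
      "\<forall>j. \<bar>j\<bar> \<le> int N \<longrightarrow> (\<forall>v\<in>A. dist (zit f g j v) (zit f g j w) \<le> c/2)"
      "v \<in> A" "\<not> dist v w < \<mu>" by blast
    then have "Good N A w v" unfolding Good_def by (simp add: not_less)
    then show ?thesis by blast
  qed
  then obtain As ws vs where H0: "\<And>N. Good N (As N) (ws N) (vs N)"
    by metis
  have HX: "As N \<subseteq> X" and Hc: "compact (As N)" and Hconn: "connected (As N)"
    and Hw: "ws N \<in> As N" and Hv: "vs N \<in> As N" and Hd: "dist (vs N) (ws N) \<ge> \<mu>" for N
    using H0[of N] unfolding Good_def by simp_all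
  have Hwin: "\<And>j v. \<bar>j\<bar> \<le> int N \<Longrightarrow> v \<in> As N \<Longrightarrow> dist (zit f g j v) (zit f g j (ws N)) \<le> c/2" for N
    using H0[of N] unfolding Good_def by simp
  have "compact (X \<times> X)" using X by (simp add: compact_Times)
  then have sc: "seq_compact (X \<times> X)" by (simp add: compact_eq_seq_compact_metric)
  have allp: "\<And>N. (ws N, vs N) \<in> X \<times> X" using HX Hw Hv by blast
  have "\<exists>l\<in>X \<times> X. \<exists>r. strict_mono r \<and> ((\<lambda>N. (ws N, vs N)) \<circ> r) \<longlonglongrightarrow> l"
    using sc[unfolded seq_compact_def, rule_format, OF allp] .
  then obtain l \<phi> where l: "l \<in> X \<times> X" "strict_mono \<phi>" "((\<lambda>N. (ws N, vs N)) \<circ> \<phi>) \<longlonglongrightarrow> l"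
    by blast
  define w0 where "w0 = fst l"
  define v0 where "v0 = snd l"
  define B where "B i = As (\<phi> i)" for i
  define wi where "wi i = ws (\<phi> i)" for i
  define vi where "vi i = vs (\<phi> i)" for i
  have wlim: "wi \<longlonglongrightarrow> w0"
    using tendsto_fst[OF l(3)] unfolding w0_def wi_def by (simp add: comp_def)
  have vlim: "vi \<longlonglongrightarrow> v0"
    using tendsto_snd[OF l(3)] unfolding v0_def vi_def by (simp add: comp_def)
  have w0X: "w0 \<in> X" and v0X: "v0 \<in> X" using l(1) unfolding w0_def v0_def by auto
  have phi_ge: "i \<le> \<phi> i" for i using l(2) by (simp add: seq_suble)
  have BX: "B i \<subseteq> X" and Bc: "compact (B i)" and Bconn: "connected (B i)"
    and wiB: "wi i \<in> B i" and viB: "vi i \<in> B i" and dvw: "dist (vi i) (wi i) \<ge> \<mu>" for i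
    unfolding B_def wi_def vi_def using HX Hc Hconn Hw Hv Hd by auto
  have Bwin: "\<And>j v. \<bar>j\<bar> \<le> int i \<Longrightarrow> v \<in> B i \<Longrightarrow> dist (zit f g j v) (zit f g j (wi i)) \<le> c/2" for i
  proof -
    fix j v assume "\<bar>j\<bar> \<le> int i" "v \<in> B i"
    moreover have "int i \<le> int (\<phi> i)" using phi_ge by simp
    ultimately show "dist (zit f g j v) (zit f g j (wi i)) \<le> c/2"
      using Hwin[of j "\<phi> i" v] unfolding B_def wi_def by simp
  qed
  define K where "K m = closure (\<Union>i\<in>{m..}. B i)" for m
  define L where "L = (\<Inter>m. K m)"
  have closedX: "closed X" using X by (simp add: compact_imp_closed)
  have KX: "K m \<subseteq> X" for m
    unfolding K_def using BX closedX by (intro closure_minimal) auto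
  have Kcl: "closed (K m)" for m unfolding K_def by simp
  have Kcomp: "compact (K m)" for m
  proof -
    have "compact (X \<inter> K m)" using X Kcl by blast
    moreover have "X \<inter> K m = K m" using KX by blast
    ultimately show ?thesis by simp
  qed
  have Kmono: "m \<le> n \<Longrightarrow> K n \<subseteq> K m" for m n
    unfolding K_def by (intro closure_mono) (fastforce intro: le_trans)
  have BK: "i \<ge> m \<Longrightarrow> B i \<subseteq> K m" for i m
    unfolding K_def using closure_subset by fastforce
  have LX: "L \<subseteq> X" unfolding L_def using KX by blast
  have Lcl: "closed L" unfolding L_def using Kcl by blast
  have Lcomp: "compact L"
  proof -
    have "compact (X \<inter> L)" using X Lcl by blast
    moreover have "X \<inter> L = L" using LX by blast
    ultimately show ?thesis by simp
  qed
  have limK: "\<And>s x. s \<longlonglongrightarrow> x \<Longrightarrow> (\<And>i. s i \<in> B i) \<Longrightarrow> x \<in> L"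
  proof -
    fix s x assume sx: "s \<longlonglongrightarrow> x" and sB: "\<And>i. s i \<in> B i"
    show "x \<in> L" unfolding L_def
    proof (rule INT_I)
      fix m assume "m \<in> (UNIV::nat set)"
      have t1: "(\<lambda>i. s (i + m)) \<longlonglongrightarrow> x" using sx by (rule LIMSEQ_ignore_initial_segment)
      have t2: "\<And>i. s (i + m) \<in> K m" using sB BK by (meson le_add2 subsetD)
      show "x \<in> K m" using closed_sequentially[OF Kcl[of m] t2 t1] .
    qed
  qed
  have w0L: "w0 \<in> L" using limK[OF wlim] wiB by blast
  have v0L: "v0 \<in> L" using limK[OF vlim] viB by blast
  have "dist v0 w0 \<ge> \<mu>"
  proof -
    have "(\<lambda>i. dist (vi i) (wi i)) \<longlonglongrightarrow> dist v0 w0" using vlim wlim by (rule tendsto_dist)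
    then show ?thesis using dvw by (meson LIMSEQ_le_const)
  qed
  then have w0v0: "w0 \<noteq> v0" using mu by auto
  have Lconn: "connected L"
  proof -
    have key: False if P: "closed P" and Q: "closed Q" "Q \<noteq> {}" and PQ: "P \<union> Q = L" "P \<inter> Q = {}"
      and wP: "w0 \<in> P" for P Q
    proof -
      obtain U V where UV: "open U" "open V" "P \<subseteq> U" "Q \<subseteq> V" "U \<inter> V = {}"
      proof -
        have ns: "normal_space (euclidean :: 'a topology)"
          by (rule metrizable_imp_normal_space[OF metrizable_space_euclidean])
        have c1: "closedin euclidean P" using P by (simp only: closed_closedin)
        have c2: "closedin euclidean Q" using Q(1) by (simp only: closed_closedin)
        have c3: "disjnt P Q" using PQ(2) by (simp only: disjnt_def)
        obtain U V where "openin euclidean U" "openin euclidean V" "P \<subseteq> U" "Q \<subseteq> V" "disjnt U V"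
          using ns[unfolded normal_space_def, rule_format, OF conjI[OF c1 conjI[OF c2 c3]]] by blast
        then show ?thesis using that by (simp only: open_openin disjnt_def)
      qed
      have "\<exists>m. K m \<subseteq> U \<union> V"
      proof (rule ccontr)
        assume nm: "\<not> ?thesis"
        define F where "F m = K m \<inter> - (U \<union> V)" for m
        have "\<Inter> (range F) \<noteq> {}"
        proof (rule compact_nest_metric)
          show "compact (F n)" for n unfolding F_def using Kcomp UV by (intro compact_Int_closed) auto
          show "F n \<noteq> {}" for n unfolding F_def using nm by blast
          show "m \<le> n \<Longrightarrow> F n \<subseteq> F m" for m n unfolding F_def using Kmono by blast
        qed
        then obtain y where "y \<in> \<Inter> (range F)" by blast
        then have "y \<in> L" "y \<notin> U \<union> V" unfolding F_def L_def by auto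
        then show False using PQ UV by blast
      qed
      then obtain m0 where m0: "K m0 \<subseteq> U \<union> V" by blast
      have "\<forall>\<^sub>F i in sequentially. wi i \<in> U" using topological_tendstoD[OF wlim UV(1)] wP UV(3) by blast
      then obtain m1 where m1: "\<And>i. i \<ge> m1 \<Longrightarrow> wi i \<in> U" unfolding eventually_sequentially by blast
      obtain q where q: "q \<in> Q" using Q by blast
      then have "q \<in> K (max m0 m1)" using PQ unfolding L_def by blast
      then have "V \<inter> closure (\<Union>i\<in>{max m0 m1..}. B i) \<noteq> {}" using q UV unfolding K_def by blast
      then have "V \<inter> (\<Union>i\<in>{max m0 m1..}. B i) \<noteq> {}" using open_Int_closure_eq_empty[OF UV(2)] by blast
      then obtain i y where i: "i \<ge> max m0 m1" and y: "y \<in> B i" "y \<in> V" by blast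
      have "B i \<subseteq> U \<union> V" using BK[of m0 i] i m0 by auto
      then have "U \<inter> B i = {} \<or> V \<inter> B i = {}"
        using connectedD[OF Bconn UV(1) UV(2)] UV(5) by blast
      moreover have "wi i \<in> U \<inter> B i" using m1 i wiB by auto
      ultimately show False using y by blast
    qed
    show ?thesis
    proof (subst connected_closed_set[OF Lcl], rule notI)
      assume "\<exists>P Q. closed P \<and> closed Q \<and> P \<noteq> {} \<and> Q \<noteq> {} \<and> P \<union> Q = L \<and> P \<inter> Q = {}"
      then obtain P Q where PQ: "closed P" "closed Q" "P \<noteq> {}" "Q \<noteq> {}" "P \<union> Q = L" "P \<inter> Q = {}"
        by blast
      show False
      proof (cases "w0 \<in> P")
        case True then show False using key[of P Q] PQ by blast
      next
        case False
        then have "w0 \<in> Q" using w0L PQ by blast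
        then show False using key[of Q P] PQ by blast
      qed
    qed
  qed
  have win: "dist (zit f g j y) (zit f g j w0) \<le> c/2" if yL: "y \<in> L" for j y
  proof (rule ccontr)
    assume negw: "\<not> ?thesis"
    define \<tau> where "\<tau> = (dist (zit f g j y) (zit f g j w0) - c/2) / 3"
    have tau: "\<tau> > 0" using negw unfolding \<tau>_def by simp
    have yX: "y \<in> X" using yL LX by blast
    have zc: "continuous_on X (zit f g j)" using zit_cont[OF hom] .
    obtain \<epsilon> where eps: "\<epsilon> > 0" "\<forall>y'\<in>X. dist y' y < \<epsilon> \<longrightarrow> dist (zit f g j y') (zit f g j y) < \<tau>"
      using zc[unfolded continuous_on_iff, rule_format, OF yX tau] by blast
    have ev: "\<forall>\<^sub>F i in sequentially. wi i \<in> X"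
      using wiB BX by (intro always_eventually) blast
    have "(\<lambda>i. zit f g j (wi i)) \<longlonglongrightarrow> zit f g j w0"
      using continuous_on_tendsto_compose[OF zc wlim w0X ev] .
    then have "\<forall>\<^sub>F i in sequentially. dist (zit f g j (wi i)) (zit f g j w0) < \<tau>"
      using tau by (rule tendstoD)
    then obtain m2 where m2: "\<And>i. i \<ge> m2 \<Longrightarrow> dist (zit f g j (wi i)) (zit f g j w0) < \<tau>"
      unfolding eventually_sequentially by blast
    define M where "M = max m2 (nat \<bar>j\<bar>)"
    have "y \<in> K M" using yL unfolding L_def by blast
    then obtain y' where y': "y' \<in> (\<Union>i\<in>{M..}. B i)" "dist y' y < \<epsilon>"
      unfolding K_def using closure_approachable eps(1) by blast
    then obtain i where i: "i \<ge> M" "y' \<in> B i" by blast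
    have "\<bar>j\<bar> \<le> int i" using i unfolding M_def by linarith
    then have d1: "dist (zit f g j y') (zit f g j (wi i)) \<le> c/2" using Bwin i by blast
    have d2: "dist (zit f g j y') (zit f g j y) < \<tau>" using eps y' i BX by blast
    have d3: "dist (zit f g j (wi i)) (zit f g j w0) < \<tau>" using m2 i unfolding M_def by simp
    have "dist (zit f g j y) (zit f g j w0) \<le> dist (zit f g j y') (zit f g j y) + dist (zit f g j y') (zit f g j (wi i)) + dist (zit f g j (wi i)) (zit f g j w0)"
      using dist_triangle[of "zit f g j y" "zit f g j w0" "zit f g j y'"]
        dist_triangle[of "zit f g j y'" "zit f g j w0" "zit f g j (wi i)"]
      by (simp add: dist_commute)
    then show False using d1 d2 d3 negw \<tau>_def by argo
  qed
  have diam: "diameter (zit f g j ` L) \<le> c" for j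
  proof -
    have "dist a b \<le> c" if hab: "a \<in> zit f g j ` L" "b \<in> zit f g j ` L" for a b
    proof -
      obtain y y' where "y \<in> L" "y' \<in> L" "a = zit f g j y" "b = zit f g j y'" using hab by blast
      then have "dist a (zit f g j w0) \<le> c/2" "dist b (zit f g j w0) \<le> c/2" using win by auto
      then show ?thesis using dist_triangle2[of a b "zit f g j w0"] by linarith
    qed
    then show ?thesis unfolding diameter_def using c
      by (auto intro!: cSUP_least)
  qed
  have "(SUP n\<in>(UNIV::int set). ereal (diameter (zit f g n ` L))) \<le> ereal c"
    using diam by (intro SUP_least) simp
  moreover have "(SUP n\<in>(UNIV::int set). ereal (diameter (zit f g n ` L))) > ereal c"
  proof (rule cw[rule_format])
    show "L \<subseteq> X \<and> compact L \<and> connected L \<and> (\<exists>a\<in>L. \<exists>b\<in>L. a \<noteq> b)"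
      using LX Lcomp Lconn w0L v0L w0v0 by blast
  qed
  ultimately show False by simp
qed


theorem mainTheorem8:
  fixes X :: "'a::metric_space set" and f g :: "'a \<Rightarrow> 'a" and x z :: 'a
  assumes "compact X"
    and "homeomorphism X X f g"
    and "cw_expansive X f g"
    and "x \<in> X"
    and "sink X f x"
    and "z \<in> alpha_limit g x"
    and "space_locally_connected_at X z"
  shows "\<exists>n>0. (f ^^ n) x = x"
proof -
  note X = assms(1) and hom = assms(2) and xX = assms(4)
  have fX: "f ` X \<subseteq> X" and gX: "g ` X \<subseteq> X" and fc: "continuous_on X f" and gc: "continuous_on X g"
    and gf: "\<forall>y\<in>X. g (f y) = y" and fg: "\<forall>y\<in>X. f (g y) = y"
    using hom unfolding homeomorphism_def by auto
  have closedX: "closed X" using X by (simp add: compact_imp_closed)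
  obtain c where c: "c > 0" and cwc: "\<forall>C. C \<subseteq> X \<and> compact C \<and> connected C \<and> (\<exists>a\<in>C. \<exists>b\<in>C. a \<noteq> b)
      \<longrightarrow> (SUP n\<in>(UNIV::int set). ereal (diameter (zit f g n ` C))) > ereal c"
    using assms(3) unfolding cw_expansive_def by blast
  have weak: "\<And>e. e > 0 \<Longrightarrow> nbhd_in X (local_stable_set X f e x) x"
    using assms(5) unfolding sink_def weak_sink_def by blast
  obtain \<epsilon>0 where e0: "\<epsilon>0 > 0" "local_stable_set X f \<epsilon>0 x \<subseteq> stable_set X f x"
    using assms(5) unfolding sink_def by blast
  obtain rr where rr: "strict_mono rr" "(\<lambda>k. (g ^^ rr k) x) \<longlonglongrightarrow> z"
    using assms(6) unfolding alpha_limit_def by blast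
  have dX: "(g ^^ m) x \<in> X" for m using funpow_in[OF gX xX] .
  have zX: "z \<in> X"
    using closed_sequentially[OF closedX _ rr(2)] dX by blast
  have lyap: "\<exists>s>0. \<forall>y\<in>X. dist y x < s \<longrightarrow> y \<in> local_stable_set X f e x" if epos: "e > 0" for e
  proof -
    obtain U where U: "openin (top_of_set X) U" "x \<in> U" "U \<subseteq> local_stable_set X f e x"
      using weak[OF epos] unfolding nbhd_in_def by blast
    then obtain s where "s > 0" "\<forall>x'\<in>X. dist x' x < s \<longrightarrow> x' \<in> U"
      unfolding openin_euclidean_subtopology_iff by blast
    then show ?thesis using U(3) by blast
  qed
  have recur: "\<exists>p. p \<ge> M \<and> p \<ge> 1 \<and> dist ((f ^^ p) x) x < r" if r: "r > 0" for r M
  proof (rule ccontr)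
    assume "\<not> ?thesis"
    then have far: "dist ((f ^^ p) x) x \<ge> r" if "p \<ge> M" "p \<ge> 1" for p
      using that by (auto simp: not_less)
    define e where "e = c/2"
    have e: "e > 0" using c unfolding e_def by simp
    obtain s where s: "s > 0" "\<forall>y\<in>X. dist y x < s \<longrightarrow> y \<in> local_stable_set X f e x"
      using lyap[OF e] by blast
    define r1 where "r1 = min (s/2) (r/2)"
    have r1: "r1 > 0" "r1 < s" "r1 < r" using s r unfolding r1_def by auto
    define \<mu> where "\<mu> = min r1 (c/2)"
    have mu: "\<mu> > 0" "\<mu> \<le> r1" "\<mu> \<le> c/2" using r1 c unfolding \<mu>_def by auto
    obtain N where N: "\<forall>A w. A \<subseteq> X \<longrightarrow> compact A \<longrightarrow> connected A \<longrightarrow> w \<in> A \<longrightarrow>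
       (\<forall>j. \<bar>j\<bar> \<le> int N \<longrightarrow> (\<forall>v\<in>A. dist (zit f g j v) (zit f g j w) \<le> c/2)) \<longrightarrow>
       (\<forall>v\<in>A. dist v w < \<mu>)"
      using limit_lemma[OF X hom cwc c mu(1)] by blast
    obtain \<eta> where eta: "\<eta> > 0" "\<forall>i<N. \<forall>u\<in>X. \<forall>v\<in>X. dist u v < \<eta> \<longrightarrow> dist ((f ^^ i) u) ((f ^^ i) v) < \<mu>"
      using unif_iter[OF X fc fX mu(1)] by blast
    have "X \<inter> ball z (\<eta>/4) \<subseteq> X \<and> (\<exists>U. openin (top_of_set X) U \<and> z \<in> U \<and> U \<subseteq> X \<inter> ball z (\<eta>/4))"
      using zX eta(1) by (intro conjI exI[of _ "X \<inter> ball z (\<eta>/4)"]) (auto intro: openin_open_Int)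
    from assms(7)[unfolded space_locally_connected_at_def, rule_format, OF this]
    obtain C where C: "C \<subseteq> X \<inter> ball z (\<eta>/4)" "connected C"
      and "\<exists>U. openin (top_of_set X) U \<and> z \<in> U \<and> U \<subseteq> C" by blast
    then obtain Uz where Uz: "openin (top_of_set X) Uz" "z \<in> Uz" "Uz \<subseteq> C" by blast
    obtain G where G: "open G" "Uz = X \<inter> G" using Uz(1) unfolding openin_open by blast
    have "\<forall>\<^sub>F k in sequentially. (g ^^ rr k) x \<in> G"
      using topological_tendstoD[OF rr(2) G(1)] Uz(2) G(2) by blast
    then obtain k0 where k0: "\<And>k. k \<ge> k0 \<Longrightarrow> (g ^^ rr k) x \<in> G"
      unfolding eventually_sequentially by blast
    have dC: "(g ^^ rr k) x \<in> C" if "k \<ge> k0" for k using k0[OF that] dX G(2) Uz(3) by blast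
    define l where "l = k0 + 1 + rr k0 + M"
    define n where "n = rr l"
    have "l \<le> n" unfolding n_def using seq_suble[OF rr(1)] by simp
    then have n_ge: "n \<ge> rr k0 + 1 + M" unfolding l_def by simp
    define p where "p = n - rr k0"
    have p: "p \<ge> M" "p \<ge> 1" "n = p + rr k0" using n_ge unfolding p_def by auto
    have dlC: "(g ^^ n) x \<in> C" using dC[of l] unfolding n_def l_def by simp
    have dkC: "(g ^^ rr k0) x \<in> C" using dC by simp
    define Cb where "Cb = closure C"
    have CbX: "Cb \<subseteq> X \<inter> cball z (\<eta>/4)"
      unfolding Cb_def
    proof (rule closure_minimal)
      show "C \<subseteq> X \<inter> cball z (\<eta>/4)" using C(1) by auto
      show "closed (X \<inter> cball z (\<eta>/4))" using closedX by (simp add: closed_Int)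
    qed
    have Cbc: "compact Cb"
    proof -
      have "compact (X \<inter> Cb)" using X unfolding Cb_def by (intro compact_Int_closed) auto
      moreover have "X \<inter> Cb = Cb" using CbX by blast
      ultimately show ?thesis by simp
    qed
    have Cbconn: "connected Cb" unfolding Cb_def using C(2) by (rule connected_imp_connected_closure)
    have fnc: "continuous_on X (f ^^ n)" using funpow_cont[OF fc fX] .
    define Y where "Y = (f ^^ n) ` Cb"
    have Yc: "compact Y" unfolding Y_def
      using compact_continuous_image[OF continuous_on_subset[OF fnc] Cbc] CbX by blast
    have Yconn: "connected Y" unfolding Y_def
      using connected_continuous_image[OF continuous_on_subset[OF fnc] Cbconn] CbX by blast
    have YX: "Y \<subseteq> X" unfolding Y_def using CbX funpow_in[OF fX] by blast
    have xY: "x \<in> Y"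
    proof -
      have "x = (f ^^ n) ((g ^^ n) x)" using fg_cancel[OF fg gX xX] by simp
      moreover have "(g ^^ n) x \<in> Cb" using dlC closure_subset unfolding Cb_def by blast
      ultimately show ?thesis unfolding Y_def by blast
    qed
    have uY: "(f ^^ p) x \<in> Y"
    proof -
      have "(f ^^ n) ((g ^^ rr k0) x) = (f ^^ p) ((f ^^ rr k0) ((g ^^ rr k0) x))"
        using p(3) by (simp add: funpow_add)
      also have "\<dots> = (f ^^ p) x" using fg_cancel[OF fg gX xX] by simp
      finally have "(f ^^ n) ((g ^^ rr k0) x) = (f ^^ p) x" .
      moreover have "(g ^^ rr k0) x \<in> Cb" using dkC closure_subset unfolding Cb_def by blast
      ultimately show ?thesis unfolding Y_def by (metis image_eqI)
    qed
    have ufar: "dist ((f ^^ p) x) x \<ge> r" using far p(1,2) by blast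
    define T where "T = {y \<in> X. dist y x \<le> r1 \<and> (\<forall>j\<in>{1..n}. dist ((g ^^ j) y) ((g ^^ j) x) \<le> c/2)}"
    have Tcl: "closed T"
    proof -
      have Teq: "T = (X \<inter> cball x r1) \<inter> (\<Inter>j\<in>{1..n}. X \<inter> (g ^^ j) -` cball ((g ^^ j) x) (c/2))"
        unfolding T_def by (auto simp: dist_commute)
      have c1: "closed (X \<inter> cball x r1)" using closedX by (simp add: closed_Int)
      have c2: "closed (X \<inter> (g ^^ j) -` cball ((g ^^ j) x) (c/2))" for j
        using continuous_closed_preimage[OF funpow_cont[OF gc gX] closedX closed_cball] .
      have c3: "closed (\<Inter>j\<in>{1..n}. X \<inter> (g ^^ j) -` cball ((g ^^ j) x) (c/2))"
        using c2 by (intro closed_INT) blast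
      show ?thesis unfolding Teq by (rule closed_Int[OF c1 c3])
    qed
    define S where "S = Y \<inter> T"
    have Scl: "closed S" unfolding S_def using Yc Tcl by (simp add: compact_imp_closed closed_Int)
    have Scomp: "compact S" unfolding S_def using Yc Tcl by (rule compact_Int_closed)
    have SY: "S \<subseteq> Y" and ST: "S \<subseteq> T" unfolding S_def by auto
    have xS: "x \<in> S" unfolding S_def T_def using xY xX r1 c by auto
    have uS: "(f ^^ p) x \<notin> S" unfolding S_def T_def using ufar r1 by auto
    define A where "A = connected_component_of_set (top_of_set S) x"
    have Acc: "A \<in> connected_components_of (top_of_set S)"
      unfolding A_def using xS by (simp add: connected_component_in_connected_components_of)
    have YS: "Y \<inter> S = S" using SY by blast
    have sub: "subtopology (top_of_set Y) S = top_of_set S"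
      by (simp add: subtopology_subtopology YS)
    have bb: "A \<inter> (top_of_set Y) frontier_of S \<noteq> {}"
    proof (rule boundary_bumping_theorem_closed)
      show "connected_space (top_of_set Y)"
        using Yconn by (intro connected_space_subtopology) simp
      show "compact_space (top_of_set Y)"
        using Yc by (intro compact_space_subtopology) simp
      show "Hausdorff_space (top_of_set Y)"
        by (rule Hausdorff_space_subtopology[OF Hausdorff_space_euclidean])
      show "closedin (top_of_set Y) S" using closedin_closed_Int[OF Scl, of Y] YS by simp
      show "S \<noteq> topspace (top_of_set Y)" using uY uS by auto
      show "A \<in> connected_components_of (subtopology (top_of_set Y) S)" using Acc sub by simp
    qed
    then obtain y where yA: "y \<in> A" and yfr: "y \<in> (top_of_set Y) frontier_of S" by blast
    have AS: "A \<subseteq> S" unfolding A_def using connected_component_of_subset_topspace[of "top_of_set S" x] by simp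
    have xA: "x \<in> A" unfolding A_def using xS by (simp add: connected_component_of_refl)
    have Aconn: "connected A"
    proof -
      have "connectedin (top_of_set S) A" unfolding A_def by (rule connectedin_connected_component_of)
      then show ?thesis by (simp add: connectedin_subtopology)
    qed
    have Acompact: "compact A"
    proof -
      have "closedin (top_of_set S) A" unfolding A_def by (rule closedin_connected_component_of)
      then have "closed A" using Scl by (rule closedin_closed_trans)
      then have "compact (S \<inter> A)" using Scomp by (intro compact_Int_closed)
      moreover have "S \<inter> A = A" using AS by blast
      ultimately show ?thesis by simp
    qed
    have yS: "y \<in> S" using yA AS by blast
    have yX: "y \<in> X" using yS SY YX by blast
    have gjc: "continuous_on X (g ^^ j)" for j using funpow_cont[OF gc gX] .
    have notint: "\<not> (dist y x < r1 \<and> (\<forall>j\<in>{1..n}. dist ((g ^^ j) y) ((g ^^ j) x) < c/2))"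
    proof
      assume H: "dist y x < r1 \<and> (\<forall>j\<in>{1..n}. dist ((g ^^ j) y) ((g ^^ j) x) < c/2)"
      have "\<exists>Q. open Q \<and> Q \<inter> X = (g ^^ j) -` ball ((g ^^ j) x) (c/2) \<inter> X" for j
        using gjc[of j, unfolded continuous_on_open_invariant, rule_format, OF open_ball] .
      then obtain Op where Op: "\<And>j. open (Op j) \<and> Op j \<inter> X = (g ^^ j) -` ball ((g ^^ j) x) (c/2) \<inter> X"
        by metis
      define Ob where "Ob = ball x r1 \<inter> (\<Inter>j\<in>{1..n}. Op j)"
      have oOb: "open Ob" unfolding Ob_def using Op by (intro open_Int open_INT) auto
      have yOb: "y \<in> Ob"
      proof -
        have "y \<in> Op j" if "j \<in> {1..n}" for j
        proof -
          have "y \<in> (g ^^ j) -` ball ((g ^^ j) x) (c/2) \<inter> X" using H that yX by (simp add: dist_commute)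
          then show ?thesis using Op[of j] by blast
        qed
        then show ?thesis unfolding Ob_def using H by (simp add: dist_commute)
      qed
      have YOS: "Y \<inter> Ob \<subseteq> S"
      proof
        fix v assume v: "v \<in> Y \<inter> Ob"
        then have vX: "v \<in> X" using YX by blast
        have "dist ((g ^^ j) v) ((g ^^ j) x) \<le> c/2" if "j \<in> {1..n}" for j
        proof -
          have "v \<in> Op j \<inter> X" using v vX that unfolding Ob_def by blast
          then have "v \<in> (g ^^ j) -` ball ((g ^^ j) x) (c/2)" using Op[of j] by blast
          then show ?thesis by (simp add: dist_commute)
        qed
        moreover have "dist v x \<le> r1" using v unfolding Ob_def by (simp add: dist_commute)
        ultimately show "v \<in> S" using v vX unfolding S_def T_def by blast
      qed
      have "openin (top_of_set Y) (Y \<inter> Ob)" using oOb by (rule openin_open_Int)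
      then have "Y \<inter> Ob \<subseteq> (top_of_set Y) interior_of S" using YOS by (intro interior_of_maximal)
      then have "y \<in> (top_of_set Y) interior_of S" using yOb yS SY by blast
      then show False using yfr unfolding frontier_of_def by blast
    qed
    obtain j0 where j0: "j0 \<le> n" "dist ((g ^^ j0) y) ((g ^^ j0) x) \<ge> \<mu>"
    proof (cases "dist y x < r1")
      case True
      then obtain j where "j \<in> {1..n}" "\<not> dist ((g ^^ j) y) ((g ^^ j) x) < c/2" using notint by blast
      then show thesis using that[of j] mu by auto
    next
      case False then show thesis using that[of 0] mu by auto
    qed
    have edge: "j0 + N \<le> n"
    proof (rule ccontr)
      assume ne: "\<not> j0 + N \<le> n"
      define i where "i = n - j0"
      have iN: "i < N" and n_eq: "n = j0 + i" using ne j0(1) unfolding i_def by auto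
      obtain c0 where c0: "c0 \<in> Cb" "y = (f ^^ n) c0" using yS SY unfolding Y_def by blast
      have c0X: "c0 \<in> X" using c0 CbX by blast
      have fic0: "(f ^^ i) c0 \<in> X" using funpow_in[OF fX c0X] .
      have gnx: "(g ^^ n) x \<in> X" using dX .
      have fign: "(f ^^ i) ((g ^^ n) x) \<in> X" using funpow_in[OF fX gnx] .
      have gy: "(g ^^ j0) y = (f ^^ i) c0"
      proof -
        have "y = (f ^^ j0) ((f ^^ i) c0)" using c0(2) n_eq by (simp add: funpow_add)
        then show ?thesis using fg_cancel[OF gf fX fic0, of j0] by simp
      qed
      have gx: "(g ^^ j0) x = (f ^^ i) ((g ^^ n) x)"
      proof -
        have "x = (f ^^ n) ((g ^^ n) x)" using fg_cancel[OF fg gX xX] by simp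
        then have "x = (f ^^ j0) ((f ^^ i) ((g ^^ n) x))" using n_eq by (simp add: funpow_add)
        then show ?thesis using fg_cancel[OF gf fX fign, of j0] by simp
      qed
      have "dist z c0 \<le> \<eta>/4" using c0(1) CbX by auto
      moreover have "dist z ((g ^^ n) x) < \<eta>/4" using dlC C(1) by auto
      ultimately have "dist c0 ((g ^^ n) x) < \<eta>"
        using dist_triangle[of c0 "(g ^^ n) x" z] eta(1) by (simp add: dist_commute)
      then have "dist ((f ^^ i) c0) ((f ^^ i) ((g ^^ n) x)) < \<mu>"
        using eta(2) iN c0X gnx by blast
      then show False using j0(2) gy gx by simp
    qed
    define A' where "A' = (g ^^ j0) ` A"
    define w where "w = (g ^^ j0) x"
    have AX: "A \<subseteq> X" using AS SY YX by blast
    have A'X: "A' \<subseteq> X" unfolding A'_def using AX funpow_in[OF gX] by blast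
    have A'c: "compact A'" unfolding A'_def
      using compact_continuous_image[OF continuous_on_subset[OF gjc AX] Acompact] .
    have A'conn: "connected A'" unfolding A'_def
      using connected_continuous_image[OF continuous_on_subset[OF gjc AX] Aconn] .
    have wA': "w \<in> A'" unfolding A'_def w_def using xA by blast
    have win: "\<forall>j. \<bar>j\<bar> \<le> int N \<longrightarrow> (\<forall>v\<in>A'. dist (zit f g j v) (zit f g j w) \<le> c/2)"
    proof (intro allI impI ballI)
      fix j v assume jN: "\<bar>j\<bar> \<le> int N" and "v \<in> A'"
      then obtain a where a: "a \<in> A" "v = (g ^^ j0) a" unfolding A'_def by blast
      have aX: "a \<in> X" using a AX by blast
      have aT: "a \<in> T" using a AS ST by blast
      have z1: "zit f g j v = zit f g (j - int j0) a" using zit_g[OF fg gX aX] a(2) by simp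
      have z2: "zit f g j w = zit f g (j - int j0) x" using zit_g[OF fg gX xX] unfolding w_def by simp
      show "dist (zit f g j v) (zit f g j w) \<le> c/2"
      proof (cases "j - int j0 \<ge> 0")
        case True
        then have e1: "zit f g (j - int j0) a = (f ^^ nat (j - int j0)) a"
          and e2: "zit f g (j - int j0) x = (f ^^ nat (j - int j0)) x" unfolding zit_def by simp_all
        have "dist a x \<le> r1" using aT unfolding T_def by blast
        then have "a \<in> local_stable_set X f e x" using s(2) aX r1 by auto
        then have "dist ((f ^^ m) x) ((f ^^ m) a) \<le> e" for m unfolding local_stable_set_def by blast
        then show ?thesis using z1 z2 e1 e2 unfolding e_def by (simp add: dist_commute)
      next
        case False
        define m where "m = nat (int j0 - j)"
        have m: "m \<in> {1..n}" using False jN edge unfolding m_def by auto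
        have e1: "zit f g (j - int j0) a = (g ^^ m) a"
          and e2: "zit f g (j - int j0) x = (g ^^ m) x" unfolding zit_def m_def using False by simp_all
        have "dist ((g ^^ m) a) ((g ^^ m) x) \<le> c/2" using aT m unfolding T_def by blast
        then show ?thesis using z1 z2 e1 e2 by simp
      qed
    qed
    have "\<And>v. v \<in> A' \<Longrightarrow> dist v w < \<mu>" using N[rule_format, OF A'X A'c A'conn wA' win[rule_format]] .
    moreover have "(g ^^ j0) y \<in> A'" unfolding A'_def using yA by blast
    ultimately show False using j0(2) unfolding w_def by fastforce
  qed
  obtain s0 where s0: "s0 > 0" "\<forall>y\<in>X. dist y x < s0 \<longrightarrow> y \<in> local_stable_set X f \<epsilon>0 x"
    using lyap[OF e0(1)] by blast
  obtain p0 where p0: "p0 \<ge> 1" "dist ((f ^^ p0) x) x < s0" using recur[OF s0(1), of 0] by blast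
  have fpX: "(f ^^ p0) x \<in> X" using funpow_in[OF fX xX] .
  have "(f ^^ p0) x \<in> stable_set X f x" using s0 fpX p0 e0(2) by blast
  then have tl: "(\<lambda>m. dist ((f ^^ m) x) ((f ^^ m) ((f ^^ p0) x))) \<longlonglongrightarrow> 0"
    unfolding stable_set_def by blast
  show ?thesis
  proof (rule ccontr)
    assume np: "\<not> ?thesis"
    have p0pos: "p0 > 0" using p0(1) by simp
    have ne: "(f ^^ p0) x \<noteq> x" using np p0pos by blast
    define D where "D = dist ((f ^^ p0) x) x"
    have D: "D > 0" using ne by (simp add: D_def)
    have cp: "continuous_on X (f ^^ p0)" using funpow_cont[OF fc fX] .
    have D3: "D/3 > 0" using D by simp
    obtain \<tau> where tau: "\<tau> > 0" "\<forall>v\<in>X. dist v x < \<tau> \<longrightarrow> dist ((f ^^ p0) v) ((f ^^ p0) x) < D/3"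
      using cp[unfolded continuous_on_iff, rule_format, OF xX D3] by blast
    obtain M where M: "\<forall>m\<ge>M. norm (dist ((f ^^ m) x) ((f ^^ m) ((f ^^ p0) x)) - 0) < D/3"
      using LIMSEQ_D[OF tl D3] by blast
    have mt: "min \<tau> (D/3) > 0" using tau D3 by simp
    obtain p where p: "p \<ge> M" "dist ((f ^^ p) x) x < min \<tau> (D/3)" using recur[OF mt, of M] by blast
    have pX: "(f ^^ p) x \<in> X" using funpow_in[OF fX xX] .
    have comm: "(f ^^ p) ((f ^^ p0) x) = (f ^^ p0) ((f ^^ p) x)"
      by (metis add.commute funpow_add comp_apply)
    have d1: "dist ((f ^^ p0) ((f ^^ p) x)) ((f ^^ p0) x) < D/3" using tau(2) pX p(2) by simp
    have d2: "dist ((f ^^ p) x) ((f ^^ p0) ((f ^^ p) x)) < D/3" using M p(1) comm by fastforce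
    have d3: "dist ((f ^^ p) x) x < D/3" using p(2) by simp
    have "D \<le> dist ((f ^^ p0) x) ((f ^^ p0) ((f ^^ p) x)) + dist ((f ^^ p0) ((f ^^ p) x)) ((f ^^ p) x) + dist ((f ^^ p) x) x"
      unfolding D_def using dist_triangle[of "(f ^^ p0) x" x "(f ^^ p0) ((f ^^ p) x)"]
        dist_triangle[of "(f ^^ p0) ((f ^^ p) x)" x "(f ^^ p) x"] by linarith
    then show False using d1 d2 d3 by (simp add: dist_commute)
  qed
qed

end
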